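(* Let $n,a,b$ be positive integers and $g=a+b$. Among all double brooms $B(n,a',b')$ with $a'+b'=g$, the Wiener index is maximum when $a'=b'=g/2$ if $g$ is even, and when $a'=(g-1)/2$, $b'=(g+1)/2$ if $g$ is odd.
   Context: All graphs are finite and simple; $W(G)=\sum_{\{u,v\}\subseteq V(G)} d(u,v)$ is the Wiener index. A leaf is a vertex of degree $1$; a broom vertex is a vertex adjacent to a leaf. A double broom $B(n,a,b)$ is a tree on $n$ vertices with exactly two broom vertices $x$ and $y$ such that $\deg(x)=a+1$ and $\deg(y)=b+1$ (i.e. a path from $x$ to $y$ with $a$ pendant leaves at $x$ and $b$ pendant leaves at $y$). *)

theory Defs
  imports Main
begin

fun is_walk :: "('a \<Rightarrow> 'a \<Rightarrow> bool) \<Rightarrow> 'a list \<Rightarrow> bool" where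
  "is_walk E [] = False"
| "is_walk E [x] = True"
| "is_walk E (x # y # xs) = (E x y \<and> is_walk E (y # xs))"

definition gdist :: "'a set \<Rightarrow> ('a \<Rightarrow> 'a \<Rightarrow> bool) \<Rightarrow> 'a \<Rightarrow> 'a \<Rightarrow> nat" where
  "gdist V E u v = (LEAST k. \<exists>xs. is_walk E xs \<and> set xs \<subseteq> V \<and> hd xs = u \<and> last xs = v
                                  \<and> length xs = Suc k)"

definition wiener :: "('a::linorder) set \<Rightarrow> ('a \<Rightarrow> 'a \<Rightarrow> bool) \<Rightarrow> nat" where
  "wiener V E = (\<Sum>(u, v) \<in> {(u, v). u \<in> V \<and> v \<in> V \<and> u < v}. gdist V E u v)"

text \<open>The double broom B(n,a,b) on vertex set {0..<n}: a path 0 - 1 - ... - (L-1)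
  with L = n - a - b (so x = 0, y = L-1), the a leaves L..L+a-1 attached to x = 0 and the
  b leaves L+a..n-1 attached to y = L-1.\<close>
definition db_arc :: "nat \<Rightarrow> nat \<Rightarrow> nat \<Rightarrow> nat \<Rightarrow> nat \<Rightarrow> bool" where
  "db_arc n a b u v = (let L = n - a - b in
      (v = Suc u \<and> v < L)
    \<or> (u = 0 \<and> L \<le> v \<and> v < L + a)
    \<or> (u = L - 1 \<and> L + a \<le> v \<and> v < n))"

definition db_edge :: "nat \<Rightarrow> nat \<Rightarrow> nat \<Rightarrow> nat \<Rightarrow> nat \<Rightarrow> bool" where
  "db_edge n a b u v = (db_arc n a b u v \<or> db_arc n a b v u)"

definition double_broom_wiener :: "nat \<Rightarrow> nat \<Rightarrow> nat \<Rightarrow> nat" where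
  "double_broom_wiener n a b = wiener {0..<n} (db_edge n a b)"

end

theory Submission
  imports Defs
begin


lemma walk_lower:
  assumes lip: "\<And>u x y. u\<in>V \<Longrightarrow> x\<in>V \<Longrightarrow> y\<in>V \<Longrightarrow> E x y \<Longrightarrow> d u y \<le> d u x + (1::nat)"
  shows "is_walk E xs \<Longrightarrow> set xs \<subseteq> V \<Longrightarrow> u \<in> V \<Longrightarrow> d u (last xs) \<le> d u (hd xs) + (length xs - 1)"
proof (induction xs)
  case (Cons x xs)
  show ?case
  proof (cases xs)
    case (Cons y ys)
    have "d u (last xs) \<le> d u y + length ys"
      using Cons.IH Cons.prems Cons by auto
    then show ?thesis using lip[of u x y] Cons.prems Cons by auto
  qed simp
qed simp

lemma walk_upper:
  assumes step: "\<And>u v. u\<in>V \<Longrightarrow> v\<in>V \<Longrightarrow> u\<noteq>v \<Longrightarrow> \<exists>w\<in>V. E u w \<and> d w v + 1 = (d u v::nat)"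
  and zero: "\<And>u. d u u = 0"
  shows "u\<in>V \<Longrightarrow> v\<in>V \<Longrightarrow> \<exists>xs. is_walk E xs \<and> set xs \<subseteq> V \<and> hd xs = u \<and> last xs = v \<and> length xs = Suc (d u v)"
proof (induction "d u v" arbitrary: u)
  case 0
  then have "u = v" using step[of u v] by force
  then show ?case using 0 by (intro exI[of _ "[u]"]) auto
next
  case (Suc k)
  then have "u \<noteq> v" using zero by (metis nat.distinct(1))
  then obtain w where w: "w \<in> V" "E u w" "d w v + 1 = d u v" using step Suc by blast
  have "k = d w v" using w(3) Suc.hyps(2) by simp
  then obtain ws where ws: "is_walk E ws" "set ws \<subseteq> V" "hd ws = w" "last ws = v" "length ws = Suc (d w v)"
    using Suc.hyps(1)[of w] w(1) Suc.prems(2) by blast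
  then obtain rest where r: "ws = w # rest" by (cases ws) auto
  show ?case
    apply (rule exI[of _ "u # ws"])
    using ws w r Suc by auto
qed

lemma gdist_char:
  assumes lip: "\<And>u x y. u\<in>V \<Longrightarrow> x\<in>V \<Longrightarrow> y\<in>V \<Longrightarrow> E x y \<Longrightarrow> d u y \<le> d u x + (1::nat)"
  and step: "\<And>u v. u\<in>V \<Longrightarrow> v\<in>V \<Longrightarrow> u\<noteq>v \<Longrightarrow> \<exists>w\<in>V. E u w \<and> d w v + 1 = (d u v::nat)"
  and zero: "\<And>u. d u u = 0"
  and uv: "u \<in> V" "v \<in> V"
  shows "gdist V E u v = d u v"
  unfolding gdist_def
proof (rule Least_equality)
  show "\<exists>xs. is_walk E xs \<and> set xs \<subseteq> V \<and> hd xs = u \<and> last xs = v \<and> length xs = Suc (d u v)"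
    using walk_upper[OF step zero uv] by blast
next
  fix y assume "\<exists>xs. is_walk E xs \<and> set xs \<subseteq> V \<and> hd xs = u \<and> last xs = v \<and> length xs = Suc y"
  then obtain xs where "is_walk E xs" "set xs \<subseteq> V" "hd xs = u" "last xs = v" "length xs = Suc y" by blast
  then show "d u v \<le> y" using walk_lower[where V=V and E=E and d=d and xs=xs and u=u, OF lip] uv zero by auto
qed

definition cpos :: "nat \<Rightarrow> nat \<Rightarrow> nat \<Rightarrow> nat \<Rightarrow> nat" where
  "cpos n a b v = (if v < n - a - b then v else if v < n - a - b + a then 0 else n - a - b - 1)"
definition eflag :: "nat \<Rightarrow> nat \<Rightarrow> nat \<Rightarrow> nat \<Rightarrow> nat" where
  "eflag n a b v = (if v < n - a - b then 0 else 1)"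
definition nd :: "nat \<Rightarrow> nat \<Rightarrow> nat" where
  "nd i j = (if i \<le> j then j - i else i - j)"
definition ddist :: "nat \<Rightarrow> nat \<Rightarrow> nat \<Rightarrow> nat \<Rightarrow> nat \<Rightarrow> nat" where
  "ddist n a b u v = (if u = v then 0 else nd (cpos n a b u) (cpos n a b v) + eflag n a b u + eflag n a b v)"


lemma nd_tri: "nd i k \<le> nd i j + nd j k" unfolding nd_def by auto
lemma nd_sym: "nd i j = nd j i" unfolding nd_def by auto

lemma ddist_tri: "ddist n a b u y \<le> ddist n a b u x + ddist n a b x y"
  unfolding ddist_def using nd_tri[of "cpos n a b u" "cpos n a b x" "cpos n a b y"] nd_sym
  by (auto simp: nd_def)

lemma r1: "v < n - a - b \<Longrightarrow> cpos n a b v = v \<and> eflag n a b v = 0"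
  unfolding cpos_def eflag_def by auto
lemma r2: "n - a - b \<le> v \<Longrightarrow> v < n - a - b + a \<Longrightarrow> cpos n a b v = 0 \<and> eflag n a b v = 1"
  unfolding cpos_def eflag_def by auto
lemma r3: "n - a - b + a \<le> v \<Longrightarrow> cpos n a b v = n - a - b - 1 \<and> eflag n a b v = 1"
  unfolding cpos_def eflag_def by auto

lemma edge_d1:
  assumes "a + b + 2 \<le> n" "db_edge n a b x y"
  shows "ddist n a b x y = 1"
proof -
  let ?L = "n - a - b"
  have L: "2 \<le> ?L" using assms by arith
  have A: "ddist n a b u v = 1" if arc: "db_arc n a b u v" for u v
  proof -
    consider "v = Suc u" "v < ?L" | "u = 0" "?L \<le> v" "v < ?L + a" | "u = ?L - 1" "?L + a \<le> v" "v < n"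
      using arc unfolding db_arc_def Let_def by blast
    then show ?thesis
    proof cases
      case 1 then show ?thesis using r1[of u n a b] r1[of v n a b] by (simp add: ddist_def nd_def)
    next
      case 2 then show ?thesis using r1[of u n a b] r2[of n a b v] L by (simp add: ddist_def nd_def)
    next
      case 3 then show ?thesis using r1[of u n a b] r3[of n a b v] L by (simp add: ddist_def nd_def)
    qed
  qed
  have sym: "ddist n a b u v = ddist n a b v u" for u v
    unfolding ddist_def using nd_sym by auto
  show ?thesis using assms(2) A sym unfolding db_edge_def by metis
qed

lemma db_lip:
  assumes "a + b + 2 \<le> n" "db_edge n a b x y"
  shows "ddist n a b u y \<le> ddist n a b u x + 1"
  using ddist_tri[of n a b u y x] edge_d1[OF assms] by simp


lemma cpos_lt: "a + b + 2 \<le> n \<Longrightarrow> cpos n a b v < n - a - b"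
  unfolding cpos_def by auto
lemma eflag01: "eflag n a b v = 0 \<longleftrightarrow> v < n - a - b" "eflag n a b v = 1 \<longleftrightarrow> \<not> v < n - a - b"
  unfolding eflag_def by auto

lemma db_step:
  assumes ab: "a + b + 2 \<le> n" and uv: "u < n" "v < n" "u \<noteq> v"
  shows "\<exists>w\<in>{0..<n}. db_edge n a b u w \<and> ddist n a b w v + 1 = ddist n a b u v"
proof -
  let ?L = "n - a - b"
  let ?c = "cpos n a b" and ?e = "eflag n a b"
  have L: "2 \<le> ?L" using ab by arith
  have cv: "?c v < ?L" using cpos_lt[OF ab] .
  show ?thesis
  proof (cases "u < ?L")
    case False
    define w where "w = ?c u"
    have wL: "w < ?L" using cpos_lt[OF ab] w_def by simp
    have cw: "?c w = w" "?e w = 0" using r1[OF wL] by auto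
    have eu: "?e u = 1" using False eflag01 by simp
    have edge: "db_edge n a b u w"
    proof (cases "u < ?L + a")
      case True
      then have "w = 0" using r2[of n a b u] False w_def by simp
      then have "db_arc n a b w u" using True False uv unfolding db_arc_def Let_def by simp
      then show ?thesis unfolding db_edge_def by simp
    next
      case F2: False
      then have "w = ?L - 1" using r3[of n a b u] w_def by simp
      then have "db_arc n a b w u" using F2 False uv unfolding db_arc_def Let_def by simp
      then show ?thesis unfolding db_edge_def by simp
    qed
    have "ddist n a b w v + 1 = ddist n a b u v"
    proof (cases "w = v")
      case True
      then show ?thesis using cw eu uv w_def unfolding ddist_def nd_def by auto
    next
      case F3: False
      then show ?thesis using cw eu uv w_def unfolding ddist_def by auto
    qed
    then show ?thesis using edge wL by auto
  next
    case True
    have cu: "?c u = u" "?e u = 0" using r1[OF True] by auto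
    consider "?c v = u" | "u < ?c v" | "?c v < u" by arith
    then show ?thesis
    proof cases
      case 1
      then have vL: "\<not> v < ?L" using r1[of v n a b] uv by auto
      then have ev: "?e v = 1" using eflag01 by simp
      have "db_edge n a b u v"
      proof (cases "v < ?L + a")
        case T: True
        then have "u = 0" using r2[of n a b v] vL 1 by simp
        then show ?thesis using T vL uv unfolding db_edge_def db_arc_def Let_def by simp
      next
        case F: False
        then have "u = ?L - 1" using r3[of n a b v] 1 by simp
        then show ?thesis using F vL uv unfolding db_edge_def db_arc_def Let_def by simp
      qed
      moreover have "ddist n a b v v + 1 = ddist n a b u v"
        using cu ev 1 uv unfolding ddist_def nd_def by simp
      ultimately show ?thesis using uv by auto
    next
      case 2
      define w where "w = Suc u"
      have wL: "w < ?L" using 2 cv w_def by simp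
      have cw: "?c w = w" "?e w = 0" using r1[OF wL] by auto
      have "db_edge n a b u w" using wL w_def unfolding db_edge_def db_arc_def Let_def by simp
      moreover have "ddist n a b w v + 1 = ddist n a b u v"
      proof (cases "w = v")
        case True then show ?thesis using cw cu w_def uv unfolding ddist_def nd_def by auto
      next
        case False then show ?thesis using cw cu w_def uv 2 unfolding ddist_def nd_def by auto
      qed
      ultimately show ?thesis using wL by auto
    next
      case 3
      define w where "w = u - 1"
      have wL: "w < ?L" using 3 True w_def by simp
      have cw: "?c w = w" "?e w = 0" using r1[OF wL] by auto
      have "db_edge n a b u w" using 3 True w_def unfolding db_edge_def db_arc_def Let_def by auto
      moreover have "ddist n a b w v + 1 = ddist n a b u v"
      proof (cases "w = v")
        case True then show ?thesis using cw cu w_def uv 3 unfolding ddist_def nd_def by auto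
      next
        case False then show ?thesis using cw cu w_def uv 3 unfolding ddist_def nd_def by auto
      qed
      ultimately show ?thesis using wL by auto
    qed
  qed
qed

lemma gdist_db:
  assumes "a + b + 2 \<le> n" "u < n" "v < n"
  shows "gdist {0..<n} (db_edge n a b) u v = ddist n a b u v"
  apply (rule gdist_char)
  using db_lip[OF assms(1)] db_step[OF assms(1)] assms by (auto simp: ddist_def)



lemma pair_sum:
  fixes V :: "'a::linorder set" and f :: "'a \<Rightarrow> 'a \<Rightarrow> nat"
  assumes fin: "finite V" and sym: "\<And>x y. f x y = f y x" and dz: "\<And>x. f x x = 0"
  shows "2 * (\<Sum>(u, v) \<in> {(u, v). u \<in> V \<and> v \<in> V \<and> u < v}. f u v) = (\<Sum>u\<in>V. \<Sum>v\<in>V. f u v)"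
proof -
  define A where "A = {(u, v). u \<in> V \<and> v \<in> V \<and> u < v}"
  define B where "B = {(u, v). u \<in> V \<and> v \<in> V \<and> v < u}"
  define D where "D = {(u, v). u \<in> V \<and> v \<in> V \<and> u = v}"
  have VV: "V \<times> V = (A \<union> B) \<union> D" unfolding A_def B_def D_def by auto
  have fA: "finite A" "finite B" "finite D"
    using fin unfolding A_def B_def D_def
    by (auto intro: finite_subset[of _ "V \<times> V"])
  have s1: "(\<Sum>(u, v) \<in> V \<times> V. f u v) = (\<Sum>(u, v) \<in> A. f u v) + (\<Sum>(u, v) \<in> B. f u v) + (\<Sum>(u, v) \<in> D. f u v)"
    unfolding VV
    apply (subst sum.union_disjoint)
    using fA apply (auto simp: A_def B_def D_def)[3]
    apply (subst sum.union_disjoint)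
    using fA apply (auto simp: A_def B_def D_def)
    done
  have BA: "B = prod.swap ` A" unfolding A_def B_def by auto
  have sB: "(\<Sum>(u, v) \<in> B. f u v) = (\<Sum>(u, v) \<in> A. f u v)"
    unfolding BA by (subst sum.reindex) (auto simp: sym intro!: sum.cong)
  have sD: "(\<Sum>(u, v) \<in> D. f u v) = 0"
    by (rule sum.neutral) (auto simp: D_def dz)
  have "(\<Sum>u\<in>V. \<Sum>v\<in>V. f u v) = (\<Sum>(u, v) \<in> V \<times> V. f u v)"
    by (rule sum.cartesian_product)
  then show ?thesis using s1 sB sD unfolding A_def by simp
qed

lemma diag_sum:
  assumes "u \<in> V" "finite V"
  shows "(\<Sum>v\<in>V. ddist n a b u v) + 2 * eflag n a b u
       = (\<Sum>v\<in>V. nd (cpos n a b u) (cpos n a b v) + eflag n a b u + eflag n a b v)"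
proof -
  have "(\<Sum>v\<in>V. ddist n a b u v) = ddist n a b u u + (\<Sum>v\<in>V - {u}. ddist n a b u v)"
    using assms(2,1) by (rule sum.remove)
  moreover have "(\<Sum>v\<in>V. nd (cpos n a b u) (cpos n a b v) + eflag n a b u + eflag n a b v)
     = (nd (cpos n a b u) (cpos n a b u) + eflag n a b u + eflag n a b u) +
       (\<Sum>v\<in>V - {u}. nd (cpos n a b u) (cpos n a b v) + eflag n a b u + eflag n a b v)"
    using assms(2,1) by (rule sum.remove)
  moreover have "(\<Sum>v\<in>V - {u}. ddist n a b u v) = (\<Sum>v\<in>V - {u}. nd (cpos n a b u) (cpos n a b v) + eflag n a b u + eflag n a b v)"
    by (rule sum.cong) (auto simp: ddist_def)
  ultimately show ?thesis by (simp add: ddist_def nd_def)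
qed

lemma S_sum:
  assumes "a + b + 2 \<le> n"
  shows "(\<Sum>u\<in>{0..<n}. h (cpos n a b u)) = (\<Sum>i\<in>{0..<n-a-b}. h i) + a * h 0 + b * h (n - a - b - 1)"
proof -
  let ?L = "n - a - b"
  have "(\<Sum>u\<in>{0..<n}. h (cpos n a b u)) = (\<Sum>u\<in>{0..<?L}. h (cpos n a b u)) + (\<Sum>u\<in>{?L..<n}. h (cpos n a b u))"
    using assms by (simp add: sum.atLeastLessThan_concat)
  also have "(\<Sum>u\<in>{?L..<n}. h (cpos n a b u)) = (\<Sum>u\<in>{?L..<?L+a}. h (cpos n a b u)) + (\<Sum>u\<in>{?L+a..<n}. h (cpos n a b u))"
    using assms by (simp add: sum.atLeastLessThan_concat)
  also have "(\<Sum>u\<in>{0..<?L}. h (cpos n a b u)) = (\<Sum>i\<in>{0..<?L}. h i)"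
    by (rule sum.cong) (auto simp: r1)
  also have "(\<Sum>u\<in>{?L..<?L+a}. h (cpos n a b u)) = (\<Sum>u\<in>{?L..<?L+a}. h 0)"
    by (rule sum.cong) (auto simp: r2)
  also have "(\<Sum>u\<in>{?L+a..<n}. h (cpos n a b u)) = (\<Sum>u\<in>{?L+a..<n}. h (?L - 1))"
    by (rule sum.cong) (auto simp: r3)
  finally show ?thesis using assms by simp
qed

lemma E_sum:
  assumes "a + b + 2 \<le> n"
  shows "(\<Sum>u\<in>{0..<n}. eflag n a b u) = a + b"
proof -
  let ?L = "n - a - b"
  have "(\<Sum>u\<in>{0..<n}. eflag n a b u) = (\<Sum>u\<in>{0..<?L}. eflag n a b u) + (\<Sum>u\<in>{?L..<n}. eflag n a b u)"
    using assms by (simp add: sum.atLeastLessThan_concat)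
  also have "(\<Sum>u\<in>{0..<?L}. eflag n a b u) = 0" by (rule sum.neutral) (auto simp: eflag_def)
  also have "(\<Sum>u\<in>{?L..<n}. eflag n a b u) = (\<Sum>u\<in>{?L..<n}. 1)" by (rule sum.cong) (auto simp: eflag_def)
  finally show ?thesis using assms by simp
qed

lemma T_rev: "(\<Sum>i\<in>{0..<L}. L - 1 - i) = (\<Sum>i\<in>{0..<L::nat}. i)"
  using sum.atLeastLessThan_rev[of "\<lambda>i. i" 0 L] by (simp add: diff_diff_left)



definition PP :: "nat \<Rightarrow> nat" where "PP L = (\<Sum>i\<in>{0..<L}. \<Sum>j\<in>{0..<L}. nd i j)"
definition TT :: "nat \<Rightarrow> nat" where "TT L = (\<Sum>i\<in>{0..<L}. i)"

lemma N_formula: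
  assumes ab: "a + b + 2 \<le> n"
  shows "(\<Sum>u\<in>{0..<n}. \<Sum>v\<in>{0..<n}. nd (cpos n a b u) (cpos n a b v))
    = PP (n-a-b) + 2 * (a + b) * TT (n-a-b) + 2 * a * b * (n - a - b - 1)"
proof -
  let ?L = "n - a - b"
  have L: "2 \<le> ?L" using ab by arith
  have t1: "(\<Sum>i\<in>{0..<?L}. nd i 0) = TT ?L" unfolding TT_def by (rule sum.cong) (auto simp: nd_def)
  have t2: "(\<Sum>i\<in>{0..<?L}. nd i (?L - 1)) = TT ?L"
  proof -
    have "(\<Sum>i\<in>{0..<?L}. nd i (?L - 1)) = (\<Sum>i\<in>{0..<?L}. ?L - 1 - i)"
      by (rule sum.cong) (auto simp: nd_def)
    also have "\<dots> = TT ?L" unfolding TT_def by (rule T_rev)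
    finally show ?thesis .
  qed
  have t3: "(\<Sum>j\<in>{0..<?L}. nd 0 j) = TT ?L" unfolding TT_def by (rule sum.cong) (auto simp: nd_def)
  have t4: "(\<Sum>j\<in>{0..<?L}. nd (?L - 1) j) = TT ?L"
  proof -
    have "(\<Sum>j\<in>{0..<?L}. nd (?L - 1) j) = (\<Sum>i\<in>{0..<?L}. ?L - 1 - i)"
      by (rule sum.cong) (auto simp: nd_def)
    also have "\<dots> = TT ?L" unfolding TT_def by (rule T_rev)
    finally show ?thesis .
  qed
  have "(\<Sum>u\<in>{0..<n}. \<Sum>v\<in>{0..<n}. nd (cpos n a b u) (cpos n a b v))
     = (\<Sum>u\<in>{0..<n}. (\<lambda>i. (\<Sum>j\<in>{0..<?L}. nd i j) + a * nd i 0 + b * nd i (?L - 1)) (cpos n a b u))"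
    by (rule sum.cong) (simp_all add: S_sum[OF ab])
  also have "\<dots> = (\<Sum>i\<in>{0..<?L}. (\<Sum>j\<in>{0..<?L}. nd i j) + a * nd i 0 + b * nd i (?L - 1))
       + a * ((\<Sum>j\<in>{0..<?L}. nd 0 j) + a * nd 0 0 + b * nd 0 (?L - 1))
       + b * ((\<Sum>j\<in>{0..<?L}. nd (?L - 1) j) + a * nd (?L - 1) 0 + b * nd (?L - 1) (?L - 1))"
    by (rule S_sum[OF ab])
  also have "(\<Sum>i\<in>{0..<?L}. (\<Sum>j\<in>{0..<?L}. nd i j) + a * nd i 0 + b * nd i (?L - 1))
     = PP ?L + a * (\<Sum>i\<in>{0..<?L}. nd i 0) + b * (\<Sum>i\<in>{0..<?L}. nd i (?L - 1))"
    unfolding PP_def by (simp add: sum.distrib sum_distrib_left)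
  finally have eq: "(\<Sum>u\<in>{0..<n}. \<Sum>v\<in>{0..<n}. nd (cpos n a b u) (cpos n a b v)) =
     PP ?L + a * TT ?L + b * TT ?L + a * (TT ?L + a * nd 0 0 + b * nd 0 (?L - 1))
       + b * (TT ?L + a * nd (?L - 1) 0 + b * nd (?L - 1) (?L - 1))"
    unfolding t1 t2 t3 t4 .
  define K where "K = ?L - 1"
  have n1: "nd 0 0 = 0" "nd 0 K = K" "nd K 0 = K" "nd K K = 0" unfolding nd_def by auto
  show ?thesis unfolding eq K_def[symmetric] n1 by (simp add: algebra_simps)
qed

lemma W_formula:
  assumes ab: "a + b + 2 \<le> n"
  shows "2 * double_broom_wiener n a b + 2 * (a + b)
    = PP (n-a-b) + 2 * (a + b) * TT (n-a-b) + 2 * a * b * (n - a - b - 1) + 2 * n * (a + b)"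
proof -
  let ?V = "{0..<n}"
  have w: "double_broom_wiener n a b = (\<Sum>(u, v) \<in> {(u, v). u \<in> ?V \<and> v \<in> ?V \<and> u < v}. ddist n a b u v)"
    unfolding double_broom_wiener_def wiener_def
    by (rule sum.cong) (auto simp: gdist_db[OF ab])
  have sym: "ddist n a b x y = ddist n a b y x" for x y
    unfolding ddist_def using nd_sym[of "cpos n a b x" "cpos n a b y"] by auto
  have w2: "2 * double_broom_wiener n a b = (\<Sum>u\<in>?V. \<Sum>v\<in>?V. ddist n a b u v)"
    unfolding w by (rule pair_sum, simp, rule sym, simp add: ddist_def)
  have "(\<Sum>u\<in>?V. \<Sum>v\<in>?V. ddist n a b u v) + 2 * (\<Sum>u\<in>?V. eflag n a b u)
     = (\<Sum>u\<in>?V. (\<Sum>v\<in>?V. ddist n a b u v) + 2 * eflag n a b u)"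
    by (simp add: sum.distrib sum_distrib_left)
  also have "\<dots> = (\<Sum>u\<in>?V. \<Sum>v\<in>?V. nd (cpos n a b u) (cpos n a b v) + eflag n a b u + eflag n a b v)"
    by (rule sum.cong) (simp_all add: diag_sum)
  also have "\<dots> = (\<Sum>u\<in>?V. (\<Sum>v\<in>?V. nd (cpos n a b u) (cpos n a b v)) + n * eflag n a b u + (a + b))"
    by (rule sum.cong) (simp_all add: sum.distrib E_sum[OF ab])
  also have "\<dots> = (\<Sum>u\<in>?V. \<Sum>v\<in>?V. nd (cpos n a b u) (cpos n a b v)) + n * (a + b) + n * (a + b)"
    by (simp add: sum.distrib sum_distrib_left[symmetric] E_sum[OF ab])
  finally show ?thesis using w2 N_formula[OF ab] E_sum[OF ab] by simp
qed



lemma compare: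
  assumes s: "a1 + b1 = a2 + b2" and n: "a1 + b1 + 2 \<le> n" and p: "a1 * b1 \<le> a2 * b2"
  shows "double_broom_wiener n a1 b1 \<le> double_broom_wiener n a2 b2"
proof -
  have n2: "a2 + b2 + 2 \<le> n" using s n by simp
  have L: "n - a1 - b1 = n - a2 - b2" using s by simp
  define K where "K = n - a2 - b2 - 1"
  have f1: "2 * double_broom_wiener n a1 b1 + 2 * (a2 + b2)
    = PP (n-a2-b2) + 2 * (a2 + b2) * TT (n-a2-b2) + 2 * (a1 * b1) * K + 2 * n * (a2 + b2)"
    using W_formula[OF n] unfolding L s K_def by (simp add: mult.assoc)
  have f2: "2 * double_broom_wiener n a2 b2 + 2 * (a2 + b2)
    = PP (n-a2-b2) + 2 * (a2 + b2) * TT (n-a2-b2) + 2 * (a2 * b2) * K + 2 * n * (a2 + b2)"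
    using W_formula[OF n2] unfolding K_def by (simp add: mult.assoc)
  have "2 * (a1 * b1) * K \<le> 2 * (a2 * b2) * K" using p by simp
  then show ?thesis using f1 f2 by linarith
qed

lemma prod_even:
  fixes a b k :: nat
  assumes "a + b = 2 * k"
  shows "a * b \<le> k * k"
proof -
  have "0 \<le> (int a - int b)^2" by simp
  then have "4 * (int a * int b) \<le> (int a + int b)^2" by (simp add: power2_eq_square algebra_simps)
  also have "(int a + int b) = 2 * int k" using assms by linarith
  finally have "4 * (int a * int b) \<le> 4 * (int k * int k)" by (simp add: power2_eq_square)
  then have "int a * int b \<le> int k * int k" by linarith
  then show ?thesis by (simp flip: of_nat_mult)
qed

lemma prod_odd:
  fixes a b k :: nat
  assumes "a + b = 2 * k + 1"
  shows "a * b \<le> k * (k + 1)"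
proof -
  have "0 \<le> (int a - int b)^2" by simp
  then have "4 * (int a * int b) \<le> (int a + int b)^2" by (simp add: power2_eq_square algebra_simps)
  also have "(int a + int b) = 2 * int k + 1" using assms by linarith
  finally have "4 * (int a * int b) \<le> 4 * (int k * int k + int k) + 1" by (simp add: power2_eq_square algebra_simps)
  moreover have "\<forall>P Q::int. 4 * P \<le> 4 * Q + 1 \<longrightarrow> P \<le> Q" by presburger
  ultimately have "int a * int b \<le> int k * int k + int k" by blast
  then show ?thesis by (simp add: algebra_simps flip: of_nat_mult)
qed

theorem mainTheorem13:
  fixes n a b g :: nat
  assumes "0 < a" and "0 < b" and "a + b + 2 \<le> n" and "g = a + b"
  shows "(even g \<longrightarrow> (\<forall>a' b'. 0 < a' \<longrightarrow> 0 < b' \<longrightarrow> a' + b' = g \<longrightarrow>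
            double_broom_wiener n a' b' \<le> double_broom_wiener n (g div 2) (g div 2)))
       \<and> (odd g \<longrightarrow> (\<forall>a' b'. 0 < a' \<longrightarrow> 0 < b' \<longrightarrow> a' + b' = g \<longrightarrow>
            double_broom_wiener n a' b' \<le> double_broom_wiener n ((g - 1) div 2) ((g + 1) div 2)))"
proof (intro conjI impI allI)
  fix a' b' :: nat
  assume e: "even g" and h: "0 < a'" "0 < b'" "a' + b' = g"
  then obtain k where k: "g = 2 * k" by blast
  have kk: "g div 2 = k" using k by simp
  show "double_broom_wiener n a' b' \<le> double_broom_wiener n (g div 2) (g div 2)"
    unfolding kk
    by (rule compare) (use h k assms prod_even[of a' b' k] in auto)
next
  fix a' b' :: nat
  assume e: "odd g" and h: "0 < a'" "0 < b'" "a' + b' = g"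
  then obtain k where k: "g = 2 * k + 1" using oddE by blast
  have kk: "(g - 1) div 2 = k" "(g + 1) div 2 = k + 1" using k by simp_all
  show "double_broom_wiener n a' b' \<le> double_broom_wiener n ((g - 1) div 2) ((g + 1) div 2)"
    unfolding kk
    by (rule compare) (use h k assms prod_odd[of a' b' k] in auto)
qed

end
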